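(* Assume $E\in\mathbb{S}^n_{++}$, $0<\alpha<1$ and $0\ne X\in\partial K_E(\alpha)$. Let $S:=\frac{1}{n-\alpha^2}\big(E^{-1}-\frac{\alpha^2}{\mathrm{tr}(E^{-1}X)}E^{-1}XE^{-1}\big)$ and $q(t):=\mathrm{tr}\big(((E+tX)S)^2\big)$. Then \[ 0<t\le\alpha/\|X\|_E\ \Rightarrow\ q(t)<\frac{1}{n-\alpha^2}\Big(1-2t\,\frac{1-\alpha}{n-\alpha^2}\,\|X\|_E\,\big(\alpha-t\|X\|_E\big)\Big). \]
   Context: $\mathbb{S}^n$ is the space of real symmetric $n\times n$ matrices, $\mathbb{S}^n_{++}$ the positive definite matrices. For $E\in\mathbb{S}^n_{++}$: $\|X\|_E=\mathrm{tr}((E^{-1}X)^2)^{1/2}$, and for $\gamma>0$, $K_E(\gamma)=\{X\in\mathbb{S}^n:\mathrm{tr}(E^{-1}X)\ge\gamma\|X\|_E\}$; $\partial$ denotes boundary. *)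

theory Defs
  imports "HOL-Analysis.Analysis"
begin

text \<open>Symmetric n x n real matrices (the space S^n), index type 'n, n = CARD('n).\<close>
definition sym_mats :: "(real^'n^'n) set" where
  "sym_mats = {A. transpose A = A}"

definition pd_mats :: "(real^'n^'n) set" where
  "pd_mats = {A. A \<in> sym_mats \<and> (\<forall>x. x \<noteq> 0 \<longrightarrow> x \<bullet> (A *v x) > 0)}"

definition normE :: "real^'n^'n \<Rightarrow> real^'n^'n \<Rightarrow> real" where
  "normE E X = sqrt (trace ((matrix_inv E ** X) ** (matrix_inv E ** X)))"

definition coneK :: "real^'n^'n \<Rightarrow> real \<Rightarrow> (real^'n^'n) set" where
  "coneK E \<gamma> = {X \<in> sym_mats. trace (matrix_inv E ** X) \<ge> \<gamma> * normE E X}"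

end

theory Submission
  imports Defs
begin


definition Qf :: "('n::finite \<Rightarrow> 'n \<Rightarrow> real) \<Rightarrow> ('n \<Rightarrow> real) \<Rightarrow> real" where
  "Qf A x = (\<Sum>i\<in>UNIV. \<Sum>j\<in>UNIV. x i * A i j * x j)"

lemma sel_l: "(\<Sum>i\<in>(UNIV::'n::finite set). (if i = p then s else 0) * g i) = (s::real) * g p"
proof -
  have "(\<Sum>i\<in>(UNIV::'n set). (if i = p then s else 0) * g i) = (\<Sum>i\<in>UNIV. if i = p then s * g i else 0)"
    by (rule sum.cong) auto
  then show ?thesis by simp
qed

lemma sel_r: "(\<Sum>i\<in>(UNIV::'n::finite set). g i * (if i = p then s else 0)) = g p * (s::real)"
  using sel_l[of p s g] by (simp add: mult.commute)

lemma Qf_shift: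
  fixes A :: "'n::finite \<Rightarrow> 'n \<Rightarrow> real"
  assumes sym: "\<And>i j. A i j = A j i"
  shows "Qf A (\<lambda>i. x i + (if i = p then s else 0)) = Qf A x + 2 * s * (\<Sum>j\<in>UNIV. A p j * x j) + s\<^sup>2 * A p p"
proof -
  define e where "e = (\<lambda>i::'n. if i = p then s else 0)"
  have pt: "(x i + e i) * A i j * (x j + e j) = x i*A i j*x j + e i*(A i j*x j) + (x i*A i j)*e j + e i*(A i j*e j)" for i j
    by (simp add: algebra_simps)
  have "Qf A (\<lambda>i. x i + e i) = Qf A x + (\<Sum>i\<in>UNIV. \<Sum>j\<in>UNIV. e i * (A i j * x j))
      + (\<Sum>i\<in>UNIV. \<Sum>j\<in>UNIV. (x i * A i j) * e j) + (\<Sum>i\<in>UNIV. \<Sum>j\<in>UNIV. e i * (A i j * e j))"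
    unfolding Qf_def pt by (simp only: sum.distrib)
  also have "(\<Sum>i\<in>UNIV. \<Sum>j\<in>UNIV. e i * (A i j * x j)) = s * (\<Sum>j\<in>UNIV. A p j * x j)"
    unfolding sum_distrib_left[symmetric] e_def by (rule sel_l)
  also have "(\<Sum>i\<in>UNIV. \<Sum>j\<in>UNIV. (x i * A i j) * e j) = (\<Sum>i\<in>UNIV. (x i * A i p) * s)"
    unfolding e_def by (simp only: sel_r)
  also have "\<dots> = s * (\<Sum>j\<in>UNIV. A p j * x j)"
    by (simp add: sum_distrib_left sym mult_ac)
  also have "(\<Sum>i\<in>UNIV. \<Sum>j\<in>UNIV. e i * (A i j * e j)) = s * (A p p * s)"
    unfolding sum_distrib_left[symmetric] e_def by (simp only: sel_r sel_l)
  finally show ?thesis unfolding e_def by (simp add: power2_eq_square algebra_simps)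
qed

lemma gram_decomp:
  fixes A :: "'n::finite \<Rightarrow> 'n \<Rightarrow> real"
  assumes "finite V" "\<forall>i j. A i j = A j i" "\<forall>x. Qf A x \<ge> 0"
    "\<forall>i j. i \<notin> V \<or> j \<notin> V \<longrightarrow> A i j = 0"
  shows "\<exists>W. \<forall>i j. A i j = (\<Sum>k\<in>V. W k i * W k j)"
  using assms
proof (induction V arbitrary: A rule: finite_induct)
  case empty
  then show ?case by auto
next
  case (insert p F)
  have sym: "\<And>i j. A i j = A j i" using insert.prems by auto
  have psd: "\<And>x. Qf A x \<ge> 0" using insert.prems by auto
  define d where "d = A p p"
  have d0: "d \<ge> 0"
  proof -
    have z: "Qf A (\<lambda>i. 0) = 0" unfolding Qf_def by simp
    have "Qf A (\<lambda>i. 0 + (if i = p then 1 else 0)) = d"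
      using Qf_shift[of A "\<lambda>i. 0" p 1, OF sym] unfolding z d_def by simp
    then show ?thesis using psd by metis
  qed
  show ?case
  proof (cases "d = 0")
    case True
    have row: "A p j = 0" for j
    proof (cases "j = p")
      case True then show ?thesis using \<open>d = 0\<close> d_def by simp
    next
      case False
      define x where "x = (\<lambda>i. if i = j then (1::real) else 0)"
      have ind: "(\<Sum>l\<in>UNIV. f l * x l) = f j" for f :: "'n \<Rightarrow> real"
      proof -
        have "(\<Sum>l\<in>UNIV. f l * x l) = (\<Sum>l\<in>UNIV. if l = j then f l else 0)"
          by (rule sum.cong) (auto simp: x_def)
        also have "\<dots> = f j" by simp
        finally show ?thesis .
      qed
      have Qx: "Qf A x = A j j"
      proof -
        have "Qf A x = (\<Sum>i\<in>UNIV. (\<Sum>l\<in>UNIV. A i l * x l) * x i)"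
          unfolding Qf_def by (simp add: sum_distrib_left sum_distrib_right mult_ac)
        also have "\<dots> = (\<Sum>i\<in>UNIV. A i j * x i)" using ind by simp
        also have "\<dots> = A j j" using ind by simp
        finally show ?thesis .
      qed
      have Ax: "(\<Sum>i\<in>UNIV. A p i * x i) = A p j" using ind by simp
      have "A j j + 2 * s * A p j \<ge> 0" for s
      proof -
        have "Qf A (\<lambda>i. x i + (if i = p then s else 0)) = A j j + 2 * s * A p j"
          using Qf_shift[of A x p s, OF sym] Qx Ax \<open>d = 0\<close> d_def by simp
        then show ?thesis using psd by metis
      qed
      from this[of "- (A j j + 1) / (2 * A p j)"] show ?thesis
        by (cases "A p j = 0") (auto simp: field_simps)
    qed
    have "\<forall>i j. i \<notin> F \<or> j \<notin> F \<longrightarrow> A i j = 0"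
      using insert.prems row sym by (metis insert_iff)
    then obtain W where W: "\<forall>i j. A i j = (\<Sum>k\<in>F. W k i * W k j)"
      using insert.IH[of A] sym psd by blast
    show ?thesis
      apply (rule exI[of _ "\<lambda>k. if k = p then (\<lambda>i. 0) else W k"])
      using W insert.hyps by (auto intro!: sum.cong)
  next
    case False
    then have dpos: "d > 0" using d0 by simp
    define A' where "A' = (\<lambda>i j. A i j - A p i * A p j / d)"
    have sym': "\<forall>i j. A' i j = A' j i" unfolding A'_def using sym by (simp add: mult.commute)
    have psd': "\<forall>x. Qf A' x \<ge> 0"
    proof
      fix x
      define g where "g = (\<Sum>j\<in>UNIV. A p j * x j)"
      have "Qf A' x = Qf A x - (\<Sum>i\<in>UNIV. \<Sum>j\<in>UNIV. x i * (A p i * A p j / d) * x j)"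
        unfolding Qf_def A'_def by (simp add: algebra_simps sum_subtractf)
      also have "(\<Sum>i\<in>UNIV. \<Sum>j\<in>UNIV. x i * (A p i * A p j / d) * x j) = g * g / d"
        unfolding g_def by (simp add: sum_distrib_left sum_distrib_right sum_divide_distrib mult_ac)
      finally have 1: "Qf A' x = Qf A x - g * g / d" .
      have "Qf A (\<lambda>i. x i + (if i = p then - g / d else 0)) = Qf A x - g * g / d"
        using Qf_shift[of A x p "- g / d", OF sym] dpos unfolding g_def[symmetric] d_def[symmetric]
        by (simp add: field_simps power2_eq_square)
      with 1 psd show "Qf A' x \<ge> 0" by metis
    qed
    have supp': "\<forall>i j. i \<notin> F \<or> j \<notin> F \<longrightarrow> A' i j = 0"
    proof (intro allI impI)
      fix i j assume "i \<notin> F \<or> j \<notin> F"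
      have z: "A' i j = 0" if "i \<notin> F" for i j
      proof (cases "i = p")
        case True then show ?thesis using dpos unfolding A'_def d_def by simp
      next
        case False
        then have "A i j = 0" "A p i = 0" using that insert.prems sym by auto
        then show ?thesis unfolding A'_def by simp
      qed
      show "A' i j = 0" using z sym' \<open>i \<notin> F \<or> j \<notin> F\<close> by metis
    qed
    obtain W where W: "\<forall>i j. A' i j = (\<Sum>k\<in>F. W k i * W k j)"
      using insert.IH[of A'] sym' psd' supp' by blast
    show ?thesis
    proof (rule exI[of _ "\<lambda>k. if k = p then (\<lambda>i. A p i / sqrt d) else W k"], intro allI)
      fix i j
      have "(\<Sum>k\<in>insert p F. (if k = p then (\<lambda>i. A p i / sqrt d) else W k) i *
               (if k = p then (\<lambda>i. A p i / sqrt d) else W k) j)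
         = A p i / sqrt d * (A p j / sqrt d) + (\<Sum>k\<in>F. W k i * W k j)"
        using insert.hyps by (auto simp: sum.insert intro!: sum.cong)
      also have "\<dots> = A p i * A p j / d + A' i j" using W dpos
        by (simp add: field_simps)
      also have "\<dots> = A i j" unfolding A'_def by simp
      finally show "A i j = (\<Sum>k\<in>insert p F. (if k = p then (\<lambda>i. A p i / sqrt d) else W k) i *
               (if k = p then (\<lambda>i. A p i / sqrt d) else W k) j)" by simp
    qed
  qed
qed



lemma mm_add_r: "((A::real^'n^'m) + B) ** C = A ** C + B ** C"
  by (vector matrix_matrix_mult_def sum.distrib[symmetric] field_simps)
lemma mm_diff_r: "((A::real^'n^'m) - B) ** C = A ** C - B ** C"
  by (vector matrix_matrix_mult_def sum_subtractf[symmetric] field_simps)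
lemma mm_diff_l: "(A::real^'n^'m) ** (B - C) = A ** B - A ** C"
  by (vector matrix_matrix_mult_def sum_subtractf[symmetric] field_simps)
lemma trace_scaleR: "trace (k *\<^sub>R (A::real^'n^'n)) = k * trace A"
  by (simp add: trace_def sum_distrib_left)
lemma mm_scaleR_l: "(k *\<^sub>R (A::real^'n^'m)) ** B = k *\<^sub>R (A ** B)"
  using scalar_matrix_assoc by metis
lemma mm_scaleR_r: "(A::real^'n^'m) ** (k *\<^sub>R B) = k *\<^sub>R (A ** B)"
  by (simp add: matrix_scalar_ac scalar_matrix_assoc)

lemma trace_transpose_inner: "trace (A ** transpose B) = inner A (B::real^'n^'n)"
  by (simp add: trace_def matrix_matrix_mult_def transpose_def inner_vec_def)

lemma norm2_mat: "(norm (A::real^'n^'m))\<^sup>2 = (\<Sum>i\<in>UNIV. \<Sum>j\<in>UNIV. (A$i$j)\<^sup>2)"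
  unfolding power2_norm_eq_inner by (simp add: inner_vec_def power2_eq_square)

lemma norm_mm: "norm ((A::real^'n^'n) ** B) \<le> norm A * norm B"
proof -
  have "(norm (A ** B))\<^sup>2 = (\<Sum>i\<in>UNIV. \<Sum>j\<in>UNIV. (\<Sum>k\<in>UNIV. A$i$k * B$k$j)\<^sup>2)"
    by (simp add: norm2_mat matrix_matrix_mult_def)
  also have "\<dots> \<le> (\<Sum>i\<in>UNIV. \<Sum>j\<in>UNIV. (\<Sum>k\<in>UNIV. (A$i$k)\<^sup>2) * (\<Sum>k\<in>UNIV. (B$k$j)\<^sup>2))"
    by (intro sum_mono Cauchy_Schwarz_ineq_sum)
  also have "\<dots> = (\<Sum>i\<in>UNIV. \<Sum>k\<in>UNIV. (A$i$k)\<^sup>2) * (\<Sum>j\<in>UNIV. \<Sum>k\<in>UNIV. (B$k$j)\<^sup>2)"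
    by (rule sum_product[symmetric])
  also have "(\<Sum>j\<in>UNIV. \<Sum>k\<in>UNIV. (B$k$j)\<^sup>2) = (\<Sum>k\<in>UNIV. \<Sum>j\<in>UNIV. (B$k$j)\<^sup>2)"
    by (rule sum.swap)
  also have "(\<Sum>i\<in>UNIV. \<Sum>k\<in>UNIV. (A$i$k)\<^sup>2) * \<dots> = (norm A * norm B)\<^sup>2"
    by (simp add: norm2_mat power_mult_distrib)
  finally show ?thesis by (rule power2_le_imp_le) simp
qed

lemma gram_mat:
  fixes Ei :: "real^'n^'n"
  assumes "transpose Ei = Ei" "\<forall>x. 0 \<le> x \<bullet> (Ei *v x)"
  shows "\<exists>L::real^'n^'n. Ei = transpose L ** L"
proof -
  have sym: "\<forall>i j. Ei$i$j = Ei$j$i" using assms(1) by (metis transpose_def vec_lambda_beta)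
  have "Qf (\<lambda>i j. Ei$i$j) x = (\<chi> i. x i) \<bullet> (Ei *v (\<chi> i. x i))" for x
    by (simp add: Qf_def inner_vec_def matrix_vector_mult_def sum_distrib_left mult_ac)
  then have psd: "\<forall>x. Qf (\<lambda>i j. Ei$i$j) x \<ge> 0" using assms(2) by simp
  have "\<exists>W. \<forall>i j. Ei$i$j = (\<Sum>k\<in>(UNIV::'n set). W k i * W k j)"
  proof -
    have h: "finite (UNIV::'n set)" "\<forall>i j. (i::'n) \<notin> UNIV \<or> j \<notin> UNIV \<longrightarrow> Ei$i$j = 0" by auto
    show ?thesis using gram_decomp[of "UNIV::'n set" "\<lambda>i j. Ei$i$j", OF h(1) sym psd h(2)] .
  qed
  then obtain W where W: "\<forall>i j. Ei$i$j = (\<Sum>k\<in>(UNIV::'n set). W k i * W k j)" by blast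
  have "Ei = transpose ((\<chi> k i. W k i)::real^'n^'n) ** (\<chi> k i. W k i)"
    by (simp add: vec_eq_iff matrix_matrix_mult_def transpose_def W)
  then show ?thesis by (rule exI)
qed

lemma key_traces:
  fixes Ei X :: "real^'n^'n"
  assumes "transpose Ei = Ei" "\<forall>x. 0 \<le> x \<bullet> (Ei *v x)" "transpose X = X"
  shows "\<exists>m\<ge>0. trace (X ** Ei ** X ** Ei) = m\<^sup>2 \<and> trace (X ** Ei ** X ** Ei ** X ** Ei) \<le> m^3
     \<and> trace (X ** Ei ** X ** Ei ** X ** Ei ** X ** Ei) \<le> m^4
     \<and> trace (Ei ** X ** Ei ** X) = m\<^sup>2"
proof -
  obtain L :: "real^'n^'n" where L: "Ei = transpose L ** L" using gram_mat[OF assms(1,2)] by (elim exE) (rule that)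
  define Lt where "Lt = transpose L"
  define M where "M = L ** X ** Lt"
  have Mt: "transpose M = M" unfolding M_def Lt_def using assms(3)
    by (simp add: matrix_transpose_mul matrix_mul_assoc)
  have M2t: "transpose (M ** M) = M ** M" by (simp add: matrix_transpose_mul Mt)
  define m where "m = norm M"
  have m0: "m \<ge> 0" unfolding m_def by simp
  have t2: "trace (X ** Ei ** X ** Ei) = trace (M ** M)"
    using trace_mul_sym[of "X**Lt**L**X**Lt" L] unfolding L M_def Lt_def[symmetric]
    by (simp add: matrix_mul_assoc)
  have t2': "trace (Ei ** X ** Ei ** X) = trace (M ** M)"
    using trace_mul_sym[of Lt "L**X**Lt**L**X"] unfolding L M_def Lt_def[symmetric]
    by (simp add: matrix_mul_assoc)
  have t3: "trace (X ** Ei ** X ** Ei ** X ** Ei) = trace (M ** (M ** M))"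
    using trace_mul_sym[of "X**Lt**L**X**Lt**L**X**Lt" L] unfolding L M_def Lt_def[symmetric]
    by (simp add: matrix_mul_assoc)
  have t4: "trace (X ** Ei ** X ** Ei ** X ** Ei ** X ** Ei) = trace ((M ** M) ** (M ** M))"
    using trace_mul_sym[of "X**Lt**L**X**Lt**L**X**Lt**L**X**Lt" L] unfolding L M_def Lt_def[symmetric]
    by (simp add: matrix_mul_assoc)
  have e2: "trace (M ** M) = m\<^sup>2"
    using trace_transpose_inner[of M M] Mt by (simp add: m_def power2_norm_eq_inner)
  have nMM: "norm (M ** M) \<le> m * m" unfolding m_def by (rule norm_mm)
  have e3: "trace (M ** (M ** M)) \<le> m^3"
  proof -
    have "trace (M ** (M ** M)) = inner M (M ** M)"
      using trace_transpose_inner[of M "M ** M"] M2t by simp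
    also have "\<dots> \<le> norm M * norm (M ** M)"
      using Cauchy_Schwarz_ineq2[of M "M ** M"] abs_ge_self[of "M \<bullet> (M ** M)"] by linarith
    also have "\<dots> \<le> m * (m * m)" unfolding m_def[symmetric] using nMM m0 by (simp add: mult_left_mono)
    finally show ?thesis by (simp add: power3_eq_cube)
  qed
  have e4: "trace ((M ** M) ** (M ** M)) \<le> m^4"
  proof -
    have "trace ((M ** M) ** (M ** M)) = (norm (M ** M))\<^sup>2"
      using trace_transpose_inner[of "M ** M" "M ** M"] M2t by (simp add: power2_norm_eq_inner)
    also have "\<dots> \<le> (m * m)\<^sup>2" using nMM by (simp add: power_mono)
    finally show ?thesis by (simp add: power2_eq_square power4_eq_xxxx)
  qed
  show ?thesis using m0 t2 t2' t3 t4 e2 e3 e4 by auto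
qed



lemma pd_props:
  fixes E :: "real^'n^'n"
  assumes "E \<in> pd_mats"
  shows "E ** matrix_inv E = mat 1" "matrix_inv E ** E = mat 1"
    "transpose (matrix_inv E) = matrix_inv E" "\<forall>x. 0 \<le> x \<bullet> (matrix_inv E *v x)"
proof -
  have Et: "transpose E = E" and pos: "\<And>x. x \<noteq> 0 \<Longrightarrow> x \<bullet> (E *v x) > 0"
    using assms by (auto simp: pd_mats_def sym_mats_def)
  have "\<forall>x. E *v x = 0 \<longrightarrow> x = 0" using pos by (metis inner_zero_right less_irrefl)
  then have "\<exists>B. B ** E = mat 1" using matrix_left_invertible_ker by blast
  then have "invertible E" using invertible_left_inverse by blast
  then have inv: "E ** matrix_inv E = mat 1 \<and> matrix_inv E ** E = mat 1"
    unfolding invertible_def matrix_inv_def by (rule someI_ex)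
  then show 1: "E ** matrix_inv E = mat 1" and 2: "matrix_inv E ** E = mat 1" by auto
  define Ei where "Ei = matrix_inv E"
  have "transpose (E ** Ei) = mat 1" using 1 by (simp add: Ei_def)
  then have 3: "transpose Ei ** E = mat 1" using Et by (simp add: matrix_transpose_mul)
  have "transpose Ei = transpose Ei ** (E ** Ei)" using 1 by (simp add: Ei_def)
  also have "\<dots> = Ei" by (simp add: matrix_mul_assoc 3)
  finally show "transpose (matrix_inv E) = matrix_inv E" by (simp add: Ei_def)
  show "\<forall>x. 0 \<le> x \<bullet> (matrix_inv E *v x)"
  proof
    fix x :: "real^'n"
    define y where "y = matrix_inv E *v x"
    have xy: "x = E *v y" unfolding y_def using 1 by (simp add: matrix_vector_mul_assoc)
    have "x \<bullet> y = y \<bullet> (E *v y)" by (subst xy) (simp add: inner_commute)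
    moreover have "y \<bullet> (E *v y) \<ge> 0" using pos[of y] by (cases "y = 0") auto
    ultimately show "0 \<le> x \<bullet> (matrix_inv E *v x)" by (simp add: y_def)
  qed
qed

lemma cont_f: "continuous_on UNIV (\<lambda>Y::real^'n^'n. trace (B ** Y) - a * normE E Y)"
  unfolding normE_def trace_def matrix_matrix_mult_def
  by (simp; intro continuous_intros)

lemma frontier_eq:
  fixes E X :: "real^'n^'n"
  assumes "X \<in> (top_of_set sym_mats) frontier_of (coneK E a)"
  shows "X \<in> sym_mats" "trace (matrix_inv E ** X) = a * normE E X"
proof -
  define f where "f = (\<lambda>Y::real^'n^'n. trace (matrix_inv E ** Y) - a * normE E Y)"
  have cf: "continuous_on UNIV f" unfolding f_def by (rule cont_f)
  have K: "coneK E a = sym_mats \<inter> {Y. (\<lambda>_. 0) Y \<le> f Y}" unfolding coneK_def f_def by auto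
  have "closed {Y. (\<lambda>_. 0::real) Y \<le> f Y}" by (rule closed_Collect_le) (auto intro: cf continuous_intros)
  then have cl: "closedin (top_of_set sym_mats) (coneK E a)"
    unfolding K by (rule closedin_closed_Int)
  have Xc: "X \<in> (top_of_set sym_mats) closure_of (coneK E a)"
    and Xi: "X \<notin> (top_of_set sym_mats) interior_of (coneK E a)"
    using assms unfolding frontier_of_def by auto
  have "(top_of_set sym_mats) closure_of (coneK E a) = coneK E a" using cl by (simp only: closure_of_eq)
  then have XK: "X \<in> coneK E a" using Xc by simp
  then show "X \<in> sym_mats" unfolding coneK_def by auto
  have f0: "f X \<ge> 0" using XK unfolding K by auto
  have "\<not> f X > 0"
  proof
    assume "f X > 0"
    define U where "U = sym_mats \<inter> {Y. (\<lambda>_. 0) Y < f Y}"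
    have "open {Y. (\<lambda>_. 0::real) Y < f Y}" by (rule open_Collect_less) (auto intro: cf continuous_intros)
    then have "openin (top_of_set sym_mats) U" unfolding U_def by (rule openin_open_Int)
    moreover have "U \<subseteq> coneK E a" unfolding U_def K by auto
    ultimately have "U \<subseteq> (top_of_set sym_mats) interior_of (coneK E a)" by (rule interior_of_maximal[rotated])
    moreover have "X \<in> U" unfolding U_def using XK \<open>f X > 0\<close> unfolding K by auto
    ultimately show False using Xi by auto
  qed
  then show "trace (matrix_inv E ** X) = a * normE E X" using f0 unfolding f_def by auto
qed

lemma final_ineq:
  fixes n \<alpha> t m T3 T4 \<beta> c a b :: real
  assumes n1: "n \<ge> 1" and a0: "0<\<alpha>" and a1: "\<alpha><1" and m0: "m>0" and t0: "0<t"
    and tle: "t \<le> \<alpha>/m" and T3: "T3 \<le> m^3" and T4: "T4 \<le> m^4"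
    and \<beta>_def: "\<beta> = \<alpha>\<^sup>2/(\<alpha>*m)" and c_def: "c = 1/(n-\<alpha>\<^sup>2)" and a_def: "a = t - \<beta>" and b_def: "b = -(t*\<beta>)"
  shows "c*c*(n + 2*a*(\<alpha>*m) + (a\<^sup>2+2*b)*m\<^sup>2 + 2*(a*b)*T3 + b\<^sup>2*T4)
     < c * (1 - 2*t*((1-\<alpha>)/(n-\<alpha>\<^sup>2))*m*(\<alpha> - t*m))"
proof -
  have bet: "\<beta> = \<alpha>/m" unfolding \<beta>_def using a0 m0 by (simp add: power2_eq_square)
  have "\<alpha>*\<alpha> < \<alpha>*1" using a1 a0 by (rule mult_strict_left_mono)
  then have "\<alpha>\<^sup>2 < 1" using a1 by (simp add: power2_eq_square)
  then have np: "n - \<alpha>\<^sup>2 > 0" using n1 by linarith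
  then have cp: "c > 0" unfolding c_def by simp
  have cn: "c * (n - \<alpha>\<^sup>2) = 1" unfolding c_def using np by simp
  have bpos: "\<beta> > 0" unfolding bet using a0 m0 by simp
  have aneg: "a \<le> 0" unfolding a_def bet using tle by simp
  have bneg: "b \<le> 0" unfolding b_def using t0 bpos by simp
  have ab: "a*b \<ge> 0" using aneg bneg by (simp add: mult_nonpos_nonpos)
  define u where "u = t*m"
  have am: "a*m = u - \<alpha>" unfolding a_def bet u_def using m0 by (simp add: field_simps)
  have bm: "b*m\<^sup>2 = -(u*\<alpha>)" unfolding b_def bet u_def using m0 by (simp add: field_simps power2_eq_square)
  have u0: "u > 0" unfolding u_def using t0 m0 by simp
  define Phi where "Phi = n + 2*a*(\<alpha>*m) + (a\<^sup>2+2*b)*m\<^sup>2 + 2*(a*b)*m^3 + b\<^sup>2*m^4"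
  have "Phi = n + 2*\<alpha>*(a*m) + (a*m)\<^sup>2 + 2*(b*m\<^sup>2) + 2*(a*m)*(b*m\<^sup>2) + (b*m\<^sup>2)\<^sup>2"
    unfolding Phi_def by (simp add: algebra_simps power2_eq_square power3_eq_cube power4_eq_xxxx)
  also have "\<dots> = (n - \<alpha>\<^sup>2) - 2*u*(1-\<alpha>)*(\<alpha>-u) - u\<^sup>2*(1-\<alpha>\<^sup>2)"
    unfolding am bm by (simp add: algebra_simps power2_eq_square)
  finally have Phi: "Phi = (n - \<alpha>\<^sup>2) - 2*u*(1-\<alpha>)*(\<alpha>-u) - u\<^sup>2*(1-\<alpha>\<^sup>2)" .
  have le1: "2*(a*b)*T3 \<le> 2*(a*b)*m^3" using ab T3 by (simp add: mult_left_mono)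
  have le2: "b\<^sup>2*T4 \<le> b\<^sup>2*m^4" using T4 by (simp add: mult_left_mono)
  have "n + 2*a*(\<alpha>*m) + (a\<^sup>2+2*b)*m\<^sup>2 + 2*(a*b)*T3 + b\<^sup>2*T4 \<le> Phi"
    unfolding Phi_def using le1 le2 by linarith
  also have "\<dots> < (n - \<alpha>\<^sup>2) - 2*u*(1-\<alpha>)*(\<alpha>-u)"
    unfolding Phi using u0 \<open>\<alpha>\<^sup>2 < 1\<close> by simp
  finally have main: "n + 2*a*(\<alpha>*m) + (a\<^sup>2+2*b)*m\<^sup>2 + 2*(a*b)*T3 + b\<^sup>2*T4 < (n - \<alpha>\<^sup>2) - 2*u*(1-\<alpha>)*(\<alpha>-u)" .
  have "c*c*(n + 2*a*(\<alpha>*m) + (a\<^sup>2+2*b)*m\<^sup>2 + 2*(a*b)*T3 + b\<^sup>2*T4) < c*c*((n - \<alpha>\<^sup>2) - 2*u*(1-\<alpha>)*(\<alpha>-u))"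
    using main cp by simp
  also have "\<dots> = c * (1 - 2*t*((1-\<alpha>)/(n-\<alpha>\<^sup>2))*m*(\<alpha> - t*m))"
  proof -
    have fr: "(1-\<alpha>)/(n-\<alpha>\<^sup>2) = c*(1-\<alpha>)" unfolding c_def by simp
    have "c*c*((n - \<alpha>\<^sup>2) - 2*u*(1-\<alpha>)*(\<alpha>-u)) = c*(c*(n-\<alpha>\<^sup>2)) - c*c*(2*u*(1-\<alpha>)*(\<alpha>-u))"
      by (simp add: algebra_simps)
    also have "\<dots> = c - c*c*(2*u*(1-\<alpha>)*(\<alpha>-u))" using cn by simp
    also have "\<dots> = c * (1 - 2*t*(c*(1-\<alpha>))*m*(\<alpha> - t*m))" unfolding u_def by (simp add: algebra_simps)
    finally show ?thesis unfolding fr .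
  qed
  finally show ?thesis .
qed



theorem proposition4p6:
  fixes E X :: "real^'n^'n" and \<alpha> t :: real
  assumes "E \<in> pd_mats"
    and "0 < \<alpha>" and "\<alpha> < 1"
    and "X \<noteq> 0"
    and "X \<in> (top_of_set sym_mats) frontier_of (coneK E \<alpha>)"
    and "0 < t" and "t \<le> \<alpha> / normE E X"
  shows "let n = real CARD('n);
             Ei = matrix_inv E;
             S = (1 / (n - \<alpha>\<^sup>2)) *\<^sub>R
                   (Ei - (\<alpha>\<^sup>2 / trace (Ei ** X)) *\<^sub>R (Ei ** X ** Ei));
             q = (\<lambda>s. trace (((E + s *\<^sub>R X) ** S) ** ((E + s *\<^sub>R X) ** S)))
         in q t < (1 / (n - \<alpha>\<^sup>2)) *
              (1 - 2 * t * ((1 - \<alpha>) / (n - \<alpha>\<^sup>2)) * normE E X * (\<alpha> - t * normE E X))"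
proof -
  define n where "n = real CARD('n)"
  define Ei where "Ei = matrix_inv E"
  have EEi: "E ** Ei = mat 1" and Eit: "transpose Ei = Ei" and Eipsd: "\<forall>x. 0 \<le> x \<bullet> (Ei *v x)"
    using pd_props[OF assms(1)] by (simp_all add: Ei_def)
  have Xs: "X \<in> sym_mats" and tau: "trace (Ei ** X) = \<alpha> * normE E X"
    using frontier_eq[OF assms(5)] by (simp_all add: Ei_def)
  have Xt: "transpose X = X" using Xs by (simp add: sym_mats_def)
  obtain m where m0: "m \<ge> 0" and T2: "trace (X ** Ei ** X ** Ei) = m\<^sup>2"
     and T3: "trace (X ** Ei ** X ** Ei ** X ** Ei) \<le> m^3"
     and T4: "trace (X ** Ei ** X ** Ei ** X ** Ei ** X ** Ei) \<le> m^4"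
     and TE: "trace (Ei ** X ** Ei ** X) = m\<^sup>2"
    using key_traces[OF Eit Eipsd Xt] by (elim exE conjE) (rule that)
  have nE: "normE E X = m" unfolding normE_def Ei_def[symmetric] using TE m0
    by (simp add: matrix_mul_assoc)
  have mpos: "m > 0"
  proof (rule ccontr)
    assume "\<not> m > 0" then have "m = 0" using m0 by simp
    then show False using assms(6,7) nE by simp
  qed
  define \<tau> where "\<tau> = trace (Ei ** X)"
  have tauv: "\<tau> = \<alpha> * m" using tau nE \<tau>_def by simp
  define J where "J = X ** Ei"
  have TJ1: "trace J = \<alpha> * m" using trace_mul_sym[of Ei X] tauv \<tau>_def J_def by simp
  have TJ2: "trace (J ** J) = m\<^sup>2" using T2 by (simp add: J_def matrix_mul_assoc)
  have TJ3: "trace (J ** J ** J) \<le> m^3" using T3 by (simp add: J_def matrix_mul_assoc)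
  have TJ4: "trace (J ** J ** J ** J) \<le> m^4" using T4 by (simp add: J_def matrix_mul_assoc)
  define \<beta> where "\<beta> = \<alpha>\<^sup>2 / \<tau>"
  define c where "c = 1 / (n - \<alpha>\<^sup>2)"
  define S where "S = c *\<^sub>R (Ei - \<beta> *\<^sub>R (Ei ** X ** Ei))"
  define a where "a = t - \<beta>"
  define b where "b = -(t * \<beta>)"
  define P0 where "P0 = mat 1 + a *\<^sub>R J + b *\<^sub>R (J ** J)"
  have h1: "(E + t *\<^sub>R X) ** Ei = mat 1 + t *\<^sub>R J"
    by (simp add: mm_add_r mm_scaleR_l EEi J_def)
  have h2: "(E + t *\<^sub>R X) ** (Ei ** X ** Ei) = J + t *\<^sub>R (J ** J)"
  proof -
    have "(E + t *\<^sub>R X) ** (Ei ** X ** Ei) = ((E + t *\<^sub>R X) ** Ei) ** J"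
      by (simp add: J_def matrix_mul_assoc)
    also have "\<dots> = (mat 1 + t *\<^sub>R J) ** J" by (simp only: h1)
    also have "\<dots> = J + t *\<^sub>R (J ** J)" by (simp add: mm_add_r mm_scaleR_l)
    finally show ?thesis .
  qed
  have hP: "(E + t *\<^sub>R X) ** S = c *\<^sub>R P0"
  proof -
    have "(E + t *\<^sub>R X) ** S = c *\<^sub>R ((mat 1 + t *\<^sub>R J) - \<beta> *\<^sub>R (J + t *\<^sub>R (J ** J)))"
      unfolding S_def by (simp add: mm_scaleR_r mm_diff_l h1 h2)
    also have "\<dots> = c *\<^sub>R P0" unfolding P0_def a_def b_def
      by (simp add: algebra_simps)
    finally show ?thesis .
  qed
  have trP: "trace (P0 ** P0) = n + 2*a*trace J + (a*a + 2*b)*trace (J ** J)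
        + 2*(a*b)*trace (J ** J ** J) + b*b*trace (J ** J ** J ** J)"
    unfolding P0_def n_def
    by (simp add: matrix_add_ldistrib mm_add_r mm_scaleR_l mm_scaleR_r trace_add trace_scaleR trace_I
        matrix_mul_assoc; simp add: algebra_simps)
  have qv: "trace (((E + t *\<^sub>R X) ** S) ** ((E + t *\<^sub>R X) ** S))
      = c*c*(n + 2*a*(\<alpha>*m) + (a\<^sup>2+2*b)*m\<^sup>2 + 2*(a*b)*trace (J ** J ** J) + b\<^sup>2*trace (J ** J ** J ** J))"
    unfolding hP by (simp add: mm_scaleR_l mm_scaleR_r trace_scaleR trP TJ1 TJ2 power2_eq_square)
  have n1: "n \<ge> 1" unfolding n_def by simp
  have fin: "c*c*(n + 2*a*(\<alpha>*m) + (a\<^sup>2+2*b)*m\<^sup>2 + 2*(a*b)*trace (J ** J ** J) + b\<^sup>2*trace (J ** J ** J ** J))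
     < c * (1 - 2*t*((1-\<alpha>)/(n-\<alpha>\<^sup>2))*m*(\<alpha> - t*m))"
    by (rule final_ineq[OF n1 assms(2,3) mpos assms(6) _ TJ3 TJ4])
       (use assms(7) nE \<beta>_def tauv c_def a_def b_def in auto)
  show ?thesis
    unfolding Let_def Ei_def[symmetric] n_def[symmetric] \<tau>_def[symmetric] \<beta>_def[symmetric]
      c_def[symmetric] S_def[symmetric] nE
    using qv fin by simp
qed

end
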